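(* Let $(f_0,\dots,f_4)$ be a rational solution of $A_4(\alpha_0,\dots,\alpha_4)$ some of whose components have a pole at $t=\infty$ (indices modulo 5). (1) If for some $i$, $f_i$ has a pole at $t=\infty$ and $f_{i+1},f_{i+2},f_{i+3},f_{i+4}$ are regular there; or (2) if for some $i$, $f_i,f_{i+1},f_{i+3}$ have a pole at $t=\infty$ and $f_{i+2},f_{i+4}$ are regular there; or (3) if for some $i$, $f_i,f_{i+1},f_{i+2}$ have a pole at $t=\infty$ and $f_{i+3},f_{i+4}$ are regular there; or (4) if all of $f_0,\dots,f_4$ have a pole at $t=\infty$, then the Laurent series of $f_0,\dots,f_4$ at $t=\infty$ are uniquely determined (by the parameters and the case, with its index $i$). Moreover: in case (1), for each $k\in\{1,2,3,4\}$, $f_{i+k}\equiv0$ if $\alpha_{i+k}=0$; in case (2), $f_{i+2}\equiv0$ if $\alpha_{i+2}=0$ and $f_{i+4}\equiv0$ if $\alpha_{i+4}=0$; in case (3), $f_{i+3}\equiv0$ if $\alpha_{i+3}=0$ and $f_{i+4}\equiv0$ if $\alpha_{i+4}=0$.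
   Context: The $A_4^{(1)}$ Painlevé equation $A_4(\alpha_0,\dots,\alpha_4)$ with complex parameters $\alpha_j$ is the system for five functions $f_0,\dots,f_4$ of $t$ (indices in $\mathbb{Z}/5\mathbb{Z}$, ${}'=d/dt$): $f_j'=f_j(f_{j+1}-f_{j+2}+f_{j+3}-f_{j+4})+\alpha_j$ ($j=0,\dots,4$), $f_0+\dots+f_4=t$; hence $\sum_j\alpha_j=1$. A rational solution is a tuple of rational functions of $t$ satisfying it. *)

theory Defs
  imports "HOL-Analysis.Analysis" "HOL-Computational_Algebra.Polynomial"
begin

text \<open>Rational functions of t, represented as complex functions that agree with
  p/q wherever the denominator q does not vanish (values at poles are irrelevant).\<close>
definition is_rat_fun :: "(complex \<Rightarrow> complex) \<Rightarrow> bool" where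
  "is_rat_fun f \<longleftrightarrow> (\<exists>p q. q \<noteq> 0 \<and> (\<forall>t. poly q t \<noteq> 0 \<longrightarrow> f t = poly p t / poly q t))"

abbreviation comp :: "(nat \<Rightarrow> complex \<Rightarrow> complex) \<Rightarrow> nat \<Rightarrow> complex \<Rightarrow> complex" where
  "comp f j \<equiv> f (j mod 5)"

text \<open>Rational solution of A_4(alpha_0..alpha_4): the differential equations and the
  normalisation hold as identities of rational functions, i.e. for all but finitely many t.\<close>
definition A4_rational_solution ::
  "(nat \<Rightarrow> complex) \<Rightarrow> (nat \<Rightarrow> complex \<Rightarrow> complex) \<Rightarrow> bool" where
  "A4_rational_solution \<alpha> f \<longleftrightarrow>
     (\<forall>j<5. is_rat_fun (f j)) \<and>
     (\<forall>\<^sub>F t in cofinite.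
        (\<forall>j<5. (f j has_field_derivative
            (f j t * (comp f (j+1) t - comp f (j+2) t + comp f (j+3) t - comp f (j+4) t) + \<alpha> j))
            (at t)) \<and>
        f 0 t + f 1 t + f 2 t + f 3 t + f 4 t = t)"

definition pole_at_inf :: "(complex \<Rightarrow> complex) \<Rightarrow> bool" where
  "pole_at_inf g \<longleftrightarrow> filterlim g at_infinity at_infinity"

definition regular_at_inf :: "(complex \<Rightarrow> complex) \<Rightarrow> bool" where
  "regular_at_inf g \<longleftrightarrow> (\<exists>c. (g \<longlongrightarrow> c) at_infinity)"

definition in_case :: "(nat \<Rightarrow> complex \<Rightarrow> complex) \<Rightarrow> nat \<Rightarrow> nat \<Rightarrow> bool" where
  "in_case f c i \<longleftrightarrow>
    (c = 1 \<and> pole_at_inf (comp f i) \<and> regular_at_inf (comp f (i+1)) \<and>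
       regular_at_inf (comp f (i+2)) \<and> regular_at_inf (comp f (i+3)) \<and> regular_at_inf (comp f (i+4)))
  \<or> (c = 2 \<and> pole_at_inf (comp f i) \<and> pole_at_inf (comp f (i+1)) \<and> pole_at_inf (comp f (i+3)) \<and>
       regular_at_inf (comp f (i+2)) \<and> regular_at_inf (comp f (i+4)))
  \<or> (c = 3 \<and> pole_at_inf (comp f i) \<and> pole_at_inf (comp f (i+1)) \<and> pole_at_inf (comp f (i+2)) \<and>
       regular_at_inf (comp f (i+3)) \<and> regular_at_inf (comp f (i+4)))
  \<or> (c = 4 \<and> (\<forall>j<5. pole_at_inf (f j)))"

definition rat_zero :: "(complex \<Rightarrow> complex) \<Rightarrow> bool" where
  "rat_zero g \<longleftrightarrow> (\<forall>\<^sub>F t in cofinite. g t = 0)"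

end

theory Submission
  imports Defs "HOL-Computational_Algebra.Formal_Laurent_Series" "HOL-Decision_Procs.Dense_Linear_Order"
begin

definition sm :: "int \<Rightarrow> complex fls \<Rightarrow> bool" where
  "sm n x \<longleftrightarrow> (\<forall>k<n. fls_nth x k = 0)"

lemma sm_iff: "sm n x \<longleftrightarrow> x = 0 \<or> n \<le> fls_subdegree x"
proof
  assume h: "sm n x"
  show "x = 0 \<or> n \<le> fls_subdegree x"
  proof (cases "x = 0")
    case False
    then have "fls_nth x (fls_subdegree x) \<noteq> 0" by (rule nth_fls_subdegree_nonzero)
    with h have "\<not> fls_subdegree x < n" unfolding sm_def by blast
    then show ?thesis by simp
  qed simp
next
  assume h: "x = 0 \<or> n \<le> fls_subdegree x"
  show "sm n x" unfolding sm_def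
  proof (intro allI impI)
    fix k assume "k < n"
    show "fls_nth x k = 0"
    proof (cases "x = 0")
      case False
      with h \<open>k < n\<close> have "k < fls_subdegree x" by simp
      then show ?thesis by (rule fls_eq0_below_subdegree)
    qed simp
  qed
qed

lemma sm_0[simp]: "sm n 0" by (simp add: sm_def)
lemma sm_add: "sm n x \<Longrightarrow> sm n y \<Longrightarrow> sm n (x + y)" by (simp add: sm_def)
lemma sm_diff: "sm n x \<Longrightarrow> sm n y \<Longrightarrow> sm n (x - y)" by (simp add: sm_def)
lemma sm_uminus: "sm n x \<Longrightarrow> sm n (- x)" by (simp add: sm_def)
lemma sm_mono: "m \<le> n \<Longrightarrow> sm n x \<Longrightarrow> sm m x" by (simp add: sm_def)
lemma sm_const: "sm 0 (fls_const c)" by (simp add: sm_def)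
lemma sm_mult: "sm n x \<Longrightarrow> sm m y \<Longrightarrow> sm (n + m) (x * y)"
proof (cases "x = 0 \<or> y = 0")
  case True then show ?thesis by auto
next
  case False
  assume "sm n x" "sm m y"
  with False have "n \<le> fls_subdegree x" "m \<le> fls_subdegree y" by (simp_all add: sm_iff)
  moreover have "fls_subdegree (x * y) = fls_subdegree x + fls_subdegree y"
    using False by simp
  ultimately show ?thesis by (simp add: sm_iff)
qed
lemma sm_cmult: "sm n x \<Longrightarrow> sm n (fls_const c * x)"
  using sm_mult[OF sm_const, of n x c] by simp
lemma sm_sub: "sm (fls_subdegree x) x"
  by (simp add: sm_iff)

lemma sm_cancel:
  assumes "b \<noteq> 0" "fls_subdegree b = d" "sm n (x * b)"
  shows "sm (n - d) x"
proof (cases "x = 0")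
  case False
  then have "x * b \<noteq> 0" using assms(1) by simp
  with assms(3) have "n \<le> fls_subdegree (x * b)" by (simp add: sm_iff)
  moreover have "fls_subdegree (x * b) = fls_subdegree x + d" using False assms(1,2) by simp
  ultimately show ?thesis by (simp add: sm_iff)
qed simp

lemma sm_all_zero: "(\<And>n. n \<ge> n0 \<Longrightarrow> sm n x) \<Longrightarrow> x = 0"
proof (rule ccontr)
  assume h: "\<And>n. n \<ge> n0 \<Longrightarrow> sm n x" and x: "x \<noteq> 0"
  have "sm (max n0 (fls_subdegree x + 1)) x" by (rule h) simp
  with x show False by (simp add: sm_iff)
qed

definition T :: "complex fls" where "T = fls_X_inv"

lemma T_nth: "fls_nth T j = (if j = -1 then 1 else 0)"
  by (simp add: T_def)

lemma exact_T:
  assumes "k \<noteq> 0" "sm 0 w"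
  shows "fls_const k * T + w \<noteq> 0 \<and> fls_subdegree (fls_const k * T + w) = -1"
proof -
  have w: "\<And>j. j < 0 \<Longrightarrow> fls_nth w j = 0" using assms(2) by (simp add: sm_def)
  have n1: "fls_nth (fls_const k * T + w) (-1) = k"
    using w[of "-1"] by (simp add: T_nth)
  have lo: "fls_nth (fls_const k * T + w) j = 0" if "j < -1" for j
    using w[of j] that by (simp add: T_nth)
  have nz: "fls_const k * T + w \<noteq> 0"
    using n1 assms(1) fls_nonzeroI[of "fls_const k * T + w" "-1"] by simp
  have "fls_subdegree (fls_const k * T + w) = -1"
    using n1 assms(1) lo fls_subdegree_eqI[of "fls_const k * T + w" "-1"] by simp
  with nz show ?thesis by simp
qed

definition D :: "complex fls \<Rightarrow> complex fls" where
  "D x = - (fls_X * fls_X * fls_deriv x)"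

lemma D_nth: "fls_nth (D x) k = - (of_int (k - 1) * fls_nth x (k - 1))"
proof -
  have e: "D x = - fls_shift (-1) (fls_shift (-1) (fls_deriv x))"
    unfolding D_def mult.assoc by (simp only: fls_X_times_conv_shift(1))
  show ?thesis unfolding e by (simp add: algebra_simps)
qed

lemma sm_D: "sm n x \<Longrightarrow> sm (n + 1) (D x)"
  by (simp add: sm_def D_nth)

lemma D_add: "D (x + y) = D x + D y"
  unfolding D_def fls_deriv_add by (simp only: distrib_left minus_add_distrib)
lemma D_diff: "D (x - y) = D x - D y"
  unfolding D_def fls_deriv_sub by (simp only: right_diff_distrib minus_diff_eq) simp
lemma D_mult: "D (x * y) = D x * y + x * D y"
  unfolding D_def fls_deriv_mult by (simp add: algebra_simps)
lemma D_const: "D (fls_const c) = 0" unfolding D_def fls_deriv_const by simp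
lemma D_T: "D T = 1"
proof -
  have a: "fls_X * (fls_X_inv :: complex fls) = 1"
    by (simp only: fls_X_times_conv_shift(1) fls_X_inv_shift_to_one)
  have "D T = (fls_X * fls_X_inv) * (fls_X * fls_X_inv)"
    unfolding D_def T_def fls_deriv_X_inv by (simp add: power2_eq_square mult_ac)
  then show ?thesis unfolding a by simp
qed

lemma D_divide:
  assumes "v \<noteq> 0"
  shows "D (u / v) = (D u * v - u * D v) / (v * v)"
proof -
  obtain w where w: "w = u / v" by simp
  have uv: "w * v = u" unfolding w using assms by simp
  have e: "D u = D w * v + w * D v" unfolding uv[symmetric] by (rule D_mult)
  have "D w * (v * v) = (D w * v + w * D v) * v - (w * v) * D v"
    by (simp add: algebra_simps)
  also have "\<dots> = D u * v - u * D v" by (simp only: e[symmetric] uv)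
  finally have "D w * (v * v) = D u * v - u * D v" .
  moreover have "v * v \<noteq> 0" using assms by simp
  ultimately show ?thesis unfolding w using eq_divide_imp by blast
qed


definition R :: "complex poly \<Rightarrow> complex fls" where
  "R p = poly (map_poly fls_const p) T"

lemma R_0[simp]: "R 0 = 0" by (simp add: R_def)

lemma R_pCons: "R (pCons a p) = fls_const a + T * R p"
  by (simp add: R_def map_poly_pCons)

lemma R_add: "R (p + q) = R p + R q"
proof (induction p q rule: poly_induct2)
  case 0 then show ?case by simp
next
  case (pCons a p b q)
  then show ?case by (simp add: R_pCons algebra_simps fls_plus_const[symmetric])
qed

lemma R_uminus: "R (- p) = - R p"
  using R_add[of p "-p"] by (simp add: eq_neg_iff_add_eq_0 add.commute)

lemma R_diff: "R (p - q) = R p - R q"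
  using R_add[of p "-q"] R_uminus[of q] by simp

lemma R_smult: "R (smult c p) = fls_const c * R p"
  by (induction p) (simp_all add: R_pCons algebra_simps)

lemma R_mult: "R (p * q) = R p * R q"
  by (induction p) (simp_all add: R_pCons R_add R_smult algebra_simps)

lemma R_const: "R [:c:] = fls_const c"
  by (simp add: R_pCons)

lemma R_one: "R 1 = 1"
  using R_const[of 1] by (simp add: one_pCons)

lemma R_X: "R [:0, 1:] = T"
  by (simp add: R_pCons)

lemma R_nth: "fls_nth (R p) n = (if n \<le> 0 then coeff p (nat (- n)) else 0)"
proof (induction p arbitrary: n)
  case 0 then show ?case by simp
next
  case (pCons a p)
  have "fls_nth (R (pCons a p)) n = (if n = 0 then a else 0) + fls_nth (R p) (n + 1)"
    by (simp add: R_pCons T_def fls_X_inv_times_conv_shift)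
  also have "\<dots> = (if n \<le> 0 then coeff (pCons a p) (nat (- n)) else 0)"
    using pCons.IH[of "n+1"] by (auto simp: coeff_pCons split: nat.split) (simp_all add: nat_diff_distrib)
  finally show ?case .
qed

lemma R_eq0: "R p = 0 \<longleftrightarrow> p = 0"
proof
  assume "R p = 0"
  then have "coeff p k = 0" for k using R_nth[of p "- int k"] by simp
  then show "p = 0" by (simp add: poly_eq_iff)
qed simp

lemma R_inj: "R p = R q \<Longrightarrow> p = q"
  using R_eq0[of "p - q"] R_diff[of p q] by simp

lemma R_subdegree: "p \<noteq> 0 \<Longrightarrow> fls_subdegree (R p) = - int (degree p)"
  by (rule fls_subdegree_eqI) (auto simp: R_nth coeff_eq_0)

lemma R_pderiv: "R (pderiv p) = D (R p)"
proof (induction p)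
  case 0 then show ?case by (simp add: D_def)
next
  case (pCons a p)
  have "R (pderiv (pCons a p)) = R p + T * R (pderiv p)"
    by (simp add: pderiv_pCons R_add R_pCons)
  moreover have "D (R (pCons a p)) = R p + T * D (R p)"
    by (simp only: R_pCons D_add D_mult D_const D_T) simp
  ultimately show ?case using pCons.IH by simp
qed


definition repr :: "(complex \<Rightarrow> complex) \<Rightarrow> complex fls \<Rightarrow> bool" where
  "repr f a \<longleftrightarrow> (\<exists>p q. q \<noteq> 0 \<and> (\<forall>\<^sub>F t in cofinite. f t = poly p t / poly q t) \<and> a = R p / R q)"

lemma ev_poly_nz: "q \<noteq> 0 \<Longrightarrow> \<forall>\<^sub>F t in cofinite. poly q t \<noteq> (0::complex)"
  by (simp add: eventually_cofinite poly_roots_finite)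

lemma poly_cofinite_zero:
  assumes "\<forall>\<^sub>F t in cofinite. poly p t = (0::complex)"
  shows "p = 0"
proof (rule ccontr)
  assume "p \<noteq> 0"
  then have "finite {t. poly p t = 0}" by (rule poly_roots_finite)
  moreover have "finite {t. \<not> poly p t = 0}" using assms by (simp add: eventually_cofinite)
  ultimately have "finite ({t. poly p t = 0} \<union> {t. \<not> poly p t = 0})" by simp
  moreover have "{t. poly p t = 0} \<union> {t. \<not> poly p t = 0} = (UNIV :: complex set)" by auto
  ultimately show False using infinite_UNIV_char_0 by metis
qed

lemma cofinite_at_infinity:
  assumes "\<forall>\<^sub>F t in cofinite. P (t::complex)"
  shows "\<forall>\<^sub>F t in at_infinity. P t"
proof -
  have "finite {t. \<not> P t}" using assms by (simp add: eventually_cofinite)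
  then have "bounded {t. \<not> P t}" by (rule finite_imp_bounded)
  then obtain b where b: "\<And>x. x \<in> {t. \<not> P t} \<Longrightarrow> norm x \<le> b" by (auto simp: bounded_iff)
  show ?thesis
  proof (rule eventually_at_infinityI[of "b + 1"])
    fix x :: complex assume "b + 1 \<le> norm x"
    then show "P x" using b[of x] by force
  qed
qed

lemma rat_repr: "is_rat_fun f \<Longrightarrow> \<exists>a. repr f a"
  unfolding is_rat_fun_def repr_def
proof (elim exE conjE)
  fix p q :: "complex poly"
  assume q: "q \<noteq> 0" and h: "\<forall>t. poly q t \<noteq> 0 \<longrightarrow> f t = poly p t / poly q t"
  have "\<forall>\<^sub>F t in cofinite. f t = poly p t / poly q t"
    using ev_poly_nz[OF q] by eventually_elim (use h in blast)
  then show "\<exists>a p q. q \<noteq> 0 \<and> (\<forall>\<^sub>F t in cofinite. f t = poly p t / poly q t) \<and> a = R p / R q"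
    using q by blast
qed

lemma R_nz: "q \<noteq> 0 \<Longrightarrow> R q \<noteq> 0" by (simp add: R_eq0)

lemma repr_unique:
  assumes "repr f a" "repr g b" "\<forall>\<^sub>F t in cofinite. f t = g t"
  shows "a = b"
proof -
  obtain p1 q1 where 1: "q1 \<noteq> 0" "\<forall>\<^sub>F t in cofinite. f t = poly p1 t / poly q1 t" "a = R p1 / R q1"
    using assms(1) unfolding repr_def by blast
  obtain p2 q2 where 2: "q2 \<noteq> 0" "\<forall>\<^sub>F t in cofinite. g t = poly p2 t / poly q2 t" "b = R p2 / R q2"
    using assms(2) unfolding repr_def by blast
  have "\<forall>\<^sub>F t in cofinite. poly (p1 * q2 - p2 * q1) t = 0"
    using 1(2) 2(2) assms(3) ev_poly_nz[OF 1(1)] ev_poly_nz[OF 2(1)]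
    by eventually_elim (simp add: field_simps)
  then have "p1 * q2 - p2 * q1 = 0" by (rule poly_cofinite_zero)
  then have "R p1 * R q2 = R p2 * R q1" by (simp add: R_mult[symmetric])
  then show ?thesis using 1(3) 2(3) R_nz[OF 1(1)] R_nz[OF 2(1)] by (simp add: frac_eq_eq)
qed

lemma repr_eq:
  assumes "repr f a" "repr g a"
  shows "\<forall>\<^sub>F t in cofinite. f t = g t"
proof -
  obtain p1 q1 where 1: "q1 \<noteq> 0" "\<forall>\<^sub>F t in cofinite. f t = poly p1 t / poly q1 t" "a = R p1 / R q1"
    using assms(1) unfolding repr_def by blast
  obtain p2 q2 where 2: "q2 \<noteq> 0" "\<forall>\<^sub>F t in cofinite. g t = poly p2 t / poly q2 t" "a = R p2 / R q2"
    using assms(2) unfolding repr_def by blast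
  have "R p1 * R q2 = R p2 * R q1" using 1(3) 2(3) R_nz[OF 1(1)] R_nz[OF 2(1)] by (simp add: frac_eq_eq)
  then have "R (p1 * q2) = R (p2 * q1)" by (simp add: R_mult)
  then have e: "p1 * q2 = p2 * q1" by (rule R_inj)
  show ?thesis
    using 1(2) 2(2) ev_poly_nz[OF 1(1)] ev_poly_nz[OF 2(1)]
  proof eventually_elim
    case (elim t)
    have "poly p1 t * poly q2 t = poly p2 t * poly q1 t" using arg_cong[OF e, of "\<lambda>r. poly r t"] by simp
    then show ?case using elim by (simp add: frac_eq_eq)
  qed
qed

lemma repr_cong: "repr f a \<Longrightarrow> \<forall>\<^sub>F t in cofinite. f t = g t \<Longrightarrow> repr g a"
  unfolding repr_def
proof (elim exE conjE)
  fix p q assume "q \<noteq> 0" "\<forall>\<^sub>F t in cofinite. f t = poly p t / poly q t" "a = R p / R q"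
    "\<forall>\<^sub>F t in cofinite. f t = g t"
  moreover have "\<forall>\<^sub>F t in cofinite. g t = poly p t / poly q t"
    using calculation(2,4) by eventually_elim simp
  ultimately show "\<exists>p q. q \<noteq> 0 \<and> (\<forall>\<^sub>F t in cofinite. g t = poly p t / poly q t) \<and> a = R p / R q"
    by blast
qed

lemma repr_const: "repr (\<lambda>t. c) (fls_const c)"
  unfolding repr_def by (intro exI[of _ "[:c:]"] exI[of _ 1]) (simp add: R_const R_one)

lemma repr_id: "repr (\<lambda>t. t) T"
  unfolding repr_def by (intro exI[of _ "[:0, 1:]"] exI[of _ 1]) (simp add: R_X R_one)

lemma repr_add:
  assumes "repr f a" "repr g b"
  shows "repr (\<lambda>t. f t + g t) (a + b)"
proof -
  obtain p1 q1 where 1: "q1 \<noteq> 0" "\<forall>\<^sub>F t in cofinite. f t = poly p1 t / poly q1 t" "a = R p1 / R q1"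
    using assms(1) unfolding repr_def by blast
  obtain p2 q2 where 2: "q2 \<noteq> 0" "\<forall>\<^sub>F t in cofinite. g t = poly p2 t / poly q2 t" "b = R p2 / R q2"
    using assms(2) unfolding repr_def by blast
  have ev: "\<forall>\<^sub>F t in cofinite. f t + g t = poly (p1 * q2 + p2 * q1) t / poly (q1 * q2) t"
    using 1(2) 2(2) ev_poly_nz[OF 1(1)] ev_poly_nz[OF 2(1)]
    by eventually_elim (simp add: add_frac_eq)
  have "a + b = R (p1 * q2 + p2 * q1) / R (q1 * q2)"
    using 1(3) 2(3) R_nz[OF 1(1)] R_nz[OF 2(1)] by (simp add: R_add R_mult add_frac_eq)
  then show ?thesis unfolding repr_def using ev 1(1) 2(1)
    by (intro exI[of _ "p1 * q2 + p2 * q1"] exI[of _ "q1 * q2"]) simp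
qed

lemma repr_diff:
  assumes "repr f a" "repr g b"
  shows "repr (\<lambda>t. f t - g t) (a - b)"
proof -
  obtain p1 q1 where 1: "q1 \<noteq> 0" "\<forall>\<^sub>F t in cofinite. f t = poly p1 t / poly q1 t" "a = R p1 / R q1"
    using assms(1) unfolding repr_def by blast
  obtain p2 q2 where 2: "q2 \<noteq> 0" "\<forall>\<^sub>F t in cofinite. g t = poly p2 t / poly q2 t" "b = R p2 / R q2"
    using assms(2) unfolding repr_def by blast
  have ev: "\<forall>\<^sub>F t in cofinite. f t - g t = poly (p1 * q2 - p2 * q1) t / poly (q1 * q2) t"
    using 1(2) 2(2) ev_poly_nz[OF 1(1)] ev_poly_nz[OF 2(1)]
    by eventually_elim (simp add: diff_frac_eq)
  have "a - b = R (p1 * q2 - p2 * q1) / R (q1 * q2)"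
    using 1(3) 2(3) R_nz[OF 1(1)] R_nz[OF 2(1)] by (simp add: R_diff R_mult diff_frac_eq)
  then show ?thesis unfolding repr_def using ev 1(1) 2(1)
    by (intro exI[of _ "p1 * q2 - p2 * q1"] exI[of _ "q1 * q2"]) simp
qed

lemma repr_mult:
  assumes "repr f a" "repr g b"
  shows "repr (\<lambda>t. f t * g t) (a * b)"
proof -
  obtain p1 q1 where 1: "q1 \<noteq> 0" "\<forall>\<^sub>F t in cofinite. f t = poly p1 t / poly q1 t" "a = R p1 / R q1"
    using assms(1) unfolding repr_def by blast
  obtain p2 q2 where 2: "q2 \<noteq> 0" "\<forall>\<^sub>F t in cofinite. g t = poly p2 t / poly q2 t" "b = R p2 / R q2"
    using assms(2) unfolding repr_def by blast
  have ev: "\<forall>\<^sub>F t in cofinite. f t * g t = poly (p1 * p2) t / poly (q1 * q2) t"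
    using 1(2) 2(2) by eventually_elim simp
  have "a * b = R (p1 * p2) / R (q1 * q2)"
    using 1(3) 2(3) by (simp add: R_mult)
  then show ?thesis unfolding repr_def using ev 1(1) 2(1)
    by (intro exI[of _ "p1 * p2"] exI[of _ "q1 * q2"]) simp
qed

lemma repr_zero_imp: "repr f 0 \<Longrightarrow> \<forall>\<^sub>F t in cofinite. f t = 0"
  using repr_eq[of f 0 "\<lambda>t. 0"] repr_const[of 0] by simp


lemma repr_deriv:
  assumes "repr f a" "repr d b" "\<forall>\<^sub>F t in cofinite. (f has_field_derivative d t) (at t)"
  shows "b = D a"
proof -
  obtain p q where pq: "q \<noteq> 0" "\<forall>\<^sub>F t in cofinite. f t = poly p t / poly q t" "a = R p / R q"
    using assms(1) unfolding repr_def by blast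
  define S where "S = {t. \<not> (f t = poly p t / poly q t \<and> poly q t \<noteq> 0)}"
  have e2: "\<forall>\<^sub>F t in cofinite. f t = poly p t / poly q t \<and> poly q t \<noteq> 0"
    using eventually_conj[OF pq(2) ev_poly_nz[OF pq(1)]] .
  then have finS: "finite S" unfolding S_def by (simp add: eventually_cofinite)
  have openS: "open (- S)" using finite_imp_closed[OF finS] by (simp add: open_Compl)
  have ev: "\<forall>\<^sub>F t in cofinite. d t = (poly (pderiv p) t * poly q t - poly p t * poly (pderiv q) t) / (poly q t * poly q t)"
    using assms(3) e2
  proof eventually_elim
    case (elim t)
    then have tS: "t \<in> - S" unfolding S_def by simp
    have "((\<lambda>t. poly p t / poly q t) has_field_derivative d t) (at t)"
      by (rule has_field_derivative_transform_within_open[OF elim(1) openS tS]) (auto simp: S_def)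
    moreover have "((\<lambda>t. poly p t / poly q t) has_field_derivative
        (poly (pderiv p) t * poly q t - poly p t * poly (pderiv q) t) / (poly q t * poly q t)) (at t)"
      using elim by (intro DERIV_divide poly_DERIV) auto
    ultimately show ?case by (rule DERIV_unique)
  qed
  have rd: "repr d (R (pderiv p * q - p * pderiv q) / R (q * q))"
    unfolding repr_def using ev pq(1)
    by (intro exI[of _ "pderiv p * q - p * pderiv q"] exI[of _ "q * q"]) simp
  have b: "b = R (pderiv p * q - p * pderiv q) / R (q * q)"
    by (rule repr_unique[OF assms(2) rd]) simp
  have "D a = (D (R p) * R q - R p * D (R q)) / (R q * R q)"
    using pq(3) D_divide R_nz[OF pq(1)] by simp
  also have "\<dots> = R (pderiv p * q - p * pderiv q) / R (q * q)"
    by (simp add: R_diff R_mult R_pderiv)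
  finally show ?thesis using b by simp
qed

lemma ev_ne0_at_inf: "\<forall>\<^sub>F x in at_infinity. (x::complex) \<noteq> 0"
  by (rule eventually_at_infinityI[of 1]) auto

lemma div_div_cancel: "c \<noteq> 0 \<Longrightarrow> (a / c) / (b / c) = a / (b::complex)"
proof -
  assume c: "c \<noteq> 0"
  have "(a / c) / (b / c) = (c * a) / (c * b)" by (simp only: divide_divide_times_eq mult.commute)
  also have "\<dots> = a / b" using c by (rule nonzero_mult_divide_mult_cancel_left)
  finally show ?thesis .
qed

lemma pq_limit_le:
  fixes p q :: "complex poly"
  assumes "q \<noteq> 0" "degree p \<le> degree q"
  shows "\<exists>c. ((\<lambda>t. poly p t / poly q t) \<longlongrightarrow> c) at_infinity"
proof (cases "degree p < degree q")
  case True
  then show ?thesis using poly_divide_tendsto_0_at_infinity[OF True] by blast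
next
  case False
  then have eq: "degree p = degree q" using assms(2) by simp
  have t1: "((\<lambda>x. poly p x / x ^ degree q) \<longlongrightarrow> lead_coeff p) at_infinity"
    using poly_divide_tendsto_aux[of p] unfolding eq .
  have t2: "((\<lambda>x. poly q x / x ^ degree q) \<longlongrightarrow> lead_coeff q) at_infinity"
    using poly_divide_tendsto_aux[of q] .
  have lq: "lead_coeff q \<noteq> 0" using assms(1) by simp
  have lim: "((\<lambda>x. (poly p x / x ^ degree q) / (poly q x / x ^ degree q)) \<longlongrightarrow> lead_coeff p / lead_coeff q) at_infinity"
    by (rule tendsto_divide[OF t1 t2 lq])
  have ev:  "\<forall>\<^sub>F x in at_infinity. (poly p x / x ^ degree q) / (poly q x / x ^ degree q) = poly p x / poly q x"
    using ev_ne0_at_inf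
  proof eventually_elim
    case (elim x)
    then have "x ^ degree q \<noteq> 0" by simp
    then show ?case by (rule div_div_cancel)
  qed
  have "((\<lambda>t. poly p t / poly q t) \<longlongrightarrow> lead_coeff p / lead_coeff q) at_infinity"
    by (rule Lim_transform_eventually[OF lim ev])
  then show ?thesis by (rule exI)
qed

lemma pq_limit_gt:
  fixes p q :: "complex poly"
  assumes "q \<noteq> 0" "degree p > degree q"
  shows "filterlim (\<lambda>t. poly p t / poly q t) at_infinity at_infinity"
proof -
  have p: "p \<noteq> 0" using assms(2) by auto
  have "((\<lambda>x. poly q x / poly p x) \<longlongrightarrow> 0) at_infinity"
    using poly_divide_tendsto_0_at_infinity[OF assms(2)] .
  moreover have "\<forall>\<^sub>F x in at_infinity. poly q x / poly p x \<noteq> 0"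
    using cofinite_at_infinity[OF eventually_conj[OF ev_poly_nz[OF p] ev_poly_nz[OF assms(1)]]]
  proof eventually_elim
    case (elim x) then show ?case by (simp only: divide_eq_0_iff de_Morgan_disj) blast
  qed
  ultimately have "filterlim (\<lambda>x. poly q x / poly p x) (at 0) at_infinity"
    by (rule filterlim_atI)
  then have "filterlim (\<lambda>x. inverse (poly p x / poly q x)) (at 0) at_infinity"
    by (simp only: inverse_divide)
  then show ?thesis by (simp only: filterlim_inverse_at_iff)
qed

lemma at_inf_nbot: "(at_infinity :: complex filter) \<noteq> bot"
  by (rule trivial_limit_at_infinity)

lemma repr_pole:
  assumes "repr f a" "pole_at_inf f"
  shows "a \<noteq> 0 \<and> fls_subdegree a < 0"
proof -
  obtain p q where pq: "q \<noteq> 0" "\<forall>\<^sub>F t in cofinite. f t = poly p t / poly q t" "a = R p / R q"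
    using assms(1) unfolding repr_def by blast
  have evi: "\<forall>\<^sub>F t in at_infinity. poly p t / poly q t = f t"
    using cofinite_at_infinity[OF pq(2)] by eventually_elim (rule sym)
  have fl: "filterlim f at_infinity at_infinity" using assms(2) by (simp add: pole_at_inf_def)
  have gt: "degree p > degree q"
  proof (rule ccontr)
    assume "\<not> degree q < degree p"
    then have "degree p \<le> degree q" by simp
    then obtain c where "((\<lambda>t. poly p t / poly q t) \<longlongrightarrow> c) at_infinity"
      using pq_limit_le[OF pq(1)] by blast
    then have "(f \<longlongrightarrow> c) at_infinity" using evi by (rule Lim_transform_eventually)
    then show False using not_tendsto_and_filterlim_at_infinity[OF at_inf_nbot _ fl] by blast
  qed
  then have p: "p \<noteq> 0" by auto
  have "a \<noteq> 0" using pq(3) R_nz[OF p] R_nz[OF pq(1)] by simp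
  moreover have "fls_subdegree a = - int (degree p) + int (degree q)"
  proof -
    have "fls_subdegree (R p / R q) = fls_subdegree (R p) - fls_subdegree (R q)"
      by (rule fls_divide_subdegree) (use R_nz[OF p] R_nz[OF pq(1)] in auto)
    then show ?thesis using pq(3) R_subdegree[OF p] R_subdegree[OF pq(1)] by simp
  qed
  ultimately show ?thesis using gt by simp
qed

lemma repr_reg:
  assumes "repr f a" "regular_at_inf f"
  shows "sm 0 a"
proof -
  obtain p q where pq: "q \<noteq> 0" "\<forall>\<^sub>F t in cofinite. f t = poly p t / poly q t" "a = R p / R q"
    using assms(1) unfolding repr_def by blast
  have evi: "\<forall>\<^sub>F t in at_infinity. f t = poly p t / poly q t"
    using cofinite_at_infinity[OF pq(2)] .
  obtain c where c: "(f \<longlongrightarrow> c) at_infinity" using assms(2) by (auto simp: regular_at_inf_def)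
  have le: "degree p \<le> degree q"
  proof (rule ccontr)
    assume "\<not> degree p \<le> degree q"
    then have "filterlim (\<lambda>t. poly p t / poly q t) at_infinity at_infinity"
      using pq_limit_gt[OF pq(1)] by simp
    then have "filterlim f at_infinity at_infinity"
      using filterlim_cong[OF refl refl evi] by simp
    then show False using not_tendsto_and_filterlim_at_infinity[OF at_inf_nbot c] by blast
  qed
  show ?thesis
  proof (cases "p = 0")
    case True then show ?thesis using pq(3) by simp
  next
    case p: False
    have "fls_subdegree a = - int (degree p) + int (degree q)"
    proof -
      have "fls_subdegree (R p / R q) = fls_subdegree (R p) - fls_subdegree (R q)"
        by (rule fls_divide_subdegree) (use R_nz[OF p] R_nz[OF pq(1)] in auto)
      then show ?thesis using pq(3) R_subdegree[OF p] R_subdegree[OF pq(1)] by simp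
    qed
    then show ?thesis using le by (simp add: sm_iff)
  qed
qed


definition sys :: "complex \<Rightarrow> complex \<Rightarrow> complex \<Rightarrow> complex \<Rightarrow> complex \<Rightarrow>
   complex fls \<Rightarrow> complex fls \<Rightarrow> complex fls \<Rightarrow> complex fls \<Rightarrow> complex fls \<Rightarrow> bool" where
 "sys a0 a1 a2 a3 a4 f0 f1 f2 f3 f4 \<longleftrightarrow>
   D f0 = f0 * (f1 - f2 + f3 - f4) + fls_const a0 \<and>
   D f1 = f1 * (f2 - f3 + f4 - f0) + fls_const a1 \<and>
   D f2 = f2 * (f3 - f4 + f0 - f1) + fls_const a2 \<and>
   D f3 = f3 * (f4 - f0 + f1 - f2) + fls_const a3 \<and>
   D f4 = f4 * (f0 - f1 + f2 - f3) + fls_const a4 \<and>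
   f0 + f1 + f2 + f3 + f4 = T"

definition ex1 :: "complex fls \<Rightarrow> bool" where
  "ex1 x \<longleftrightarrow> x \<noteq> 0 \<and> fls_subdegree x = -1"

lemma ex1_scaled:
  assumes "fls_const c * B = fls_const k * T + w" "c \<noteq> 0" "k \<noteq> 0" "sm 0 w"
  shows "ex1 B"
proof -
  have h: "fls_const c * B \<noteq> 0 \<and> fls_subdegree (fls_const c * B) = -1"
    using exact_T[OF assms(3,4)] assms(1) by simp
  then have "B \<noteq> 0" by auto
  moreover have "fls_subdegree (fls_const c * B) = fls_subdegree B"
    using \<open>B \<noteq> 0\<close> assms(2) by (simp add: fls_const_nonzero)
  ultimately show ?thesis using h by (simp add: ex1_def)
qed

lemma ex1_plain:
  assumes "B = fls_const k * T + w" "k \<noteq> 0" "sm 0 w"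
  shows "ex1 B"
  using ex1_scaled[of 1 B k w] assms by simp

lemma sm_scale: "c \<noteq> 0 \<Longrightarrow> sm n (fls_const c * x) \<Longrightarrow> sm n x"
  by (simp add: sm_def)

lemma reg_lemma:
  assumes "sm 0 x" "D x = x * B + fls_const a" "ex1 B"
  shows "sm 1 x" "a = 0 \<Longrightarrow> x = 0"
proof -
  have B: "B \<noteq> 0" "fls_subdegree B = -1" using assms(3) by (auto simp: ex1_def)
  have e: "x * B = D x - fls_const a" using assms(2) by simp
  have "sm 0 (x * B)" unfolding e
    using sm_mono[OF _ sm_D[OF assms(1)], of 0] sm_const[of a] by (intro sm_diff) simp_all
  from sm_cancel[OF B this] show "sm 1 x" by simp
  assume a: "a = 0"
  show "x = 0"
  proof (rule ccontr)
    assume x: "x \<noteq> 0"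
    have "sm (fls_subdegree x + 1) (x * B)" using sm_D[OF sm_sub[of x]] e a by simp
    from sm_cancel[OF B this] have "sm (fls_subdegree x + 2) x" by (simp add: add.commute)
    with x show False by (simp add: sm_iff)
  qed
qed

lemma pole_lemma:
  assumes "x \<noteq> 0" "fls_subdegree x < 0" "D x = x * B + fls_const a"
  shows "sm 1 B"
proof -
  have e: "B * x = D x - fls_const a" using assms(3) by (simp add: mult.commute)
  have "sm (fls_subdegree x + 1) (B * x)" unfolding e
    using sm_D[OF sm_sub[of x]] sm_mono[OF _ sm_const[of a], of "fls_subdegree x + 1"] assms(2)
    by (intro sm_diff) simp_all
  from sm_cancel[OF assms(1) refl this] show ?thesis by simp
qed

lemma step_reg:
  assumes "D h = h * B + y * A" "ex1 B" "sm 1 y" "sm n A" "sm n h"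
  shows "sm (n + 1) h"
proof -
  have B: "B \<noteq> 0" "fls_subdegree B = -1" using assms(2) by (auto simp: ex1_def)
  have e: "h * B = D h - y * A" using assms(1) by simp
  have "sm (n + 1) (h * B)" unfolding e
    using sm_D[OF assms(5)] sm_mult[OF assms(3,4)] by (intro sm_diff) (simp_all add: add.commute)
  from sm_cancel[OF B this] have "sm (n + 2) h" by (simp add: add.commute)
  then show ?thesis by (rule sm_mono[rotated]) simp
qed

lemma step_pole:
  assumes "D h = h * B + y * A" "sm 1 B" "ex1 y" "sm n h"
  shows "sm (n + 2) A"
proof -
  have y: "y \<noteq> 0" "fls_subdegree y = -1" using assms(3) by (auto simp: ex1_def)
  have e: "A * y = D h - h * B" using assms(1) by (simp add: mult.commute)
  have "sm (n + 1) (A * y)" unfolding e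
    using sm_D[OF assms(4)] sm_mult[OF assms(4,2)] by (intro sm_diff) simp_all
  from sm_cancel[OF y this] show ?thesis by (simp add: add.commute)
qed

lemma diff_eq:
  assumes "D g = g * Bg + fls_const a" "D f = f * Bf + fls_const a"
  shows "D (g - f) = (g - f) * Bg + f * (Bg - Bf)"
  using assms by (simp add: D_diff algebra_simps)

lemma uniq_driver:
  assumes step: "\<And>n. sm n h0 \<Longrightarrow> sm n h1 \<Longrightarrow> sm n h2 \<Longrightarrow> sm n h3 \<Longrightarrow> sm n h4 \<Longrightarrow>
     sm (n+1) h0 \<and> sm (n+1) h1 \<and> sm (n+1) h2 \<and> sm (n+1) h3 \<and> sm (n+1) h4"
  shows "h0 = 0 \<and> h1 = 0 \<and> h2 = 0 \<and> h3 = 0 \<and> h4 = 0"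
proof -
  define n0 where "n0 = min (fls_subdegree h0) (min (fls_subdegree h1) (min (fls_subdegree h2)
     (min (fls_subdegree h3) (fls_subdegree h4))))"
  define P where "P n \<longleftrightarrow> sm n h0 \<and> sm n h1 \<and> sm n h2 \<and> sm n h3 \<and> sm n h4" for n
  have P0: "P n0" unfolding P_def n0_def
    by (intro conjI; rule sm_mono[OF _ sm_sub]) simp_all
  have Pk: "P (n0 + int k)" for k
  proof (induction k)
    case 0 then show ?case using P0 by simp
  next
    case (Suc k)
    then have "P (n0 + int k + 1)" using step unfolding P_def by blast
    then show ?case by (simp add: ac_simps)
  qed
  have all: "P n" if "n \<ge> n0" for n
    using Pk[of "nat (n - n0)"] that by simp
  show ?thesis
    using sm_all_zero[of n0 h0] sm_all_zero[of n0 h1] sm_all_zero[of n0 h2]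
      sm_all_zero[of n0 h3] sm_all_zero[of n0 h4] all unfolding P_def by blast
qed


lemma sysD:
  assumes "sys a0 a1 a2 a3 a4 f0 f1 f2 f3 f4"
  shows "D f0 = f0 * (f1 - f2 + f3 - f4) + fls_const a0"
    "D f1 = f1 * (f2 - f3 + f4 - f0) + fls_const a1"
    "D f2 = f2 * (f3 - f4 + f0 - f1) + fls_const a2"
    "D f3 = f3 * (f4 - f0 + f1 - f2) + fls_const a3"
    "D f4 = f4 * (f0 - f1 + f2 - f3) + fls_const a4"
    "T = f0 + f1 + f2 + f3 + f4"
  using assms unfolding sys_def by auto

lemma ex1_pos: "B = T + w \<Longrightarrow> sm 0 w \<Longrightarrow> ex1 B"
  using ex1_plain[of B 1 w] by simp
lemma ex1_neg: "B = w - T \<Longrightarrow> sm 0 w \<Longrightarrow> ex1 B"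
  using ex1_plain[of B "-1" w] by simp
lemma ex1_s3pos: "3 * B = T + w \<Longrightarrow> sm 0 w \<Longrightarrow> ex1 B"
  using ex1_scaled[of 3 B 1 w] by simp
lemma ex1_s3neg: "3 * B = w - T \<Longrightarrow> sm 0 w \<Longrightarrow> ex1 B"
  using ex1_scaled[of 3 B "-1" w] by simp
lemma ex1_s5pos: "5 * B = T + w \<Longrightarrow> sm 0 w \<Longrightarrow> ex1 B"
  using ex1_scaled[of 5 B 1 w] by simp

lemma sm_num: "sm n x \<Longrightarrow> sm n (numeral k * x)"
  using sm_cmult[of n x "numeral k"] by simp

lemma sm_num_cancel: "sm n (numeral k * x) \<Longrightarrow> sm n x"
  using sm_scale[of "numeral k" n x] by simp

lemma sm_A: "sm n (x1 - y1) \<Longrightarrow> sm n (x2 - y2) \<Longrightarrow> sm n (x3 - y3) \<Longrightarrow> sm n (x4 - y4) \<Longrightarrow>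
   sm n ((x1 - x2 + x3 - x4) - (y1 - y2 + y3 - y4))"
proof -
  assume a: "sm n (x1 - y1)" "sm n (x2 - y2)" "sm n (x3 - y3)" "sm n (x4 - y4)"
  have e: "(x1 - x2 + x3 - x4) - (y1 - y2 + y3 - y4) = (x1 - y1) - (x2 - y2) + (x3 - y3) - (x4 - y4)"
    by (simp add: algebra_simps)
  show ?thesis unfolding e by (rule sm_diff[OF sm_add[OF sm_diff[OF a(1) a(2)] a(3)] a(4)])
qed

lemmas smI = sm_add sm_diff sm_uminus sm_num

lemma case1_B:
  assumes "sys a0 a1 a2 a3 a4 f0 f1 f2 f3 f4" "sm 0 f1" "sm 0 f2" "sm 0 f3" "sm 0 f4"
  shows "ex1 (f2 - f3 + f4 - f0) \<and> ex1 (f3 - f4 + f0 - f1) \<and> ex1 (f4 - f0 + f1 - f2) \<and> ex1 (f0 - f1 + f2 - f3)"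
proof -
  note E = sysD[OF assms(1)]
  have 1: "ex1 (f2 - f3 + f4 - f0)"
    by (rule ex1_neg[of _ "f1 + 2 * f2 + 2 * f4"]) (unfold E(6), algebra, (intro smI; fact))
  have 2: "ex1 (f3 - f4 + f0 - f1)"
    by (rule ex1_pos[of _ "- (2 * f1) - f2 - 2 * f4"]) (unfold E(6), algebra, (intro smI; fact))
  have 3: "ex1 (f4 - f0 + f1 - f2)"
    by (rule ex1_neg[of _ "2 * f1 + f3 + 2 * f4"]) (unfold E(6), algebra, (intro smI; fact))
  have 4: "ex1 (f0 - f1 + f2 - f3)"
    by (rule ex1_pos[of _ "- (2 * f1) - 2 * f3 - f4"]) (unfold E(6), algebra, (intro smI; fact))
  from 1 2 3 4 show ?thesis by blast
qed

lemma case1: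
  assumes "sys a0 a1 a2 a3 a4 f0 f1 f2 f3 f4" "sm 0 f1" "sm 0 f2" "sm 0 f3" "sm 0 f4"
  shows "sm 1 f1 \<and> sm 1 f2 \<and> sm 1 f3 \<and> sm 1 f4 \<and> (a1 = 0 \<longrightarrow> f1 = 0) \<and> (a2 = 0 \<longrightarrow> f2 = 0)
     \<and> (a3 = 0 \<longrightarrow> f3 = 0) \<and> (a4 = 0 \<longrightarrow> f4 = 0)"
proof -
  note E = sysD[OF assms(1)]
  note B = case1_B[OF assms]
  show ?thesis
    using reg_lemma[OF assms(2) E(2)] reg_lemma[OF assms(3) E(3)] reg_lemma[OF assms(4) E(4)]
      reg_lemma[OF assms(5) E(5)] B by blast
qed

lemma case1_uniq:
  assumes f: "sys a0 a1 a2 a3 a4 f0 f1 f2 f3 f4" "sm 0 f1" "sm 0 f2" "sm 0 f3" "sm 0 f4"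
  and g: "sys a0 a1 a2 a3 a4 g0 g1 g2 g3 g4" "sm 0 g1" "sm 0 g2" "sm 0 g3" "sm 0 g4"
  shows "g0 = f0 \<and> g1 = f1 \<and> g2 = f2 \<and> g3 = f3 \<and> g4 = f4"
proof -
  note Ef = sysD[OF f(1)] and Eg = sysD[OF g(1)]
  note Bg = case1_B[OF g]
  note Ff = case1[OF f]
  have sum0: "(g0 - f0) + (g1 - f1) + (g2 - f2) + (g3 - f3) + (g4 - f4) = 0"
    using Ef(6) Eg(6) by (simp add: algebra_simps)
  have "g0 - f0 = 0 \<and> g1 - f1 = 0 \<and> g2 - f2 = 0 \<and> g3 - f3 = 0 \<and> g4 - f4 = 0"
  proof (rule uniq_driver)
    fix n assume h: "sm n (g0 - f0)" "sm n (g1 - f1)" "sm n (g2 - f2)" "sm n (g3 - f3)" "sm n (g4 - f4)"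
    have s1: "sm (n+1) (g1 - f1)"
      by (rule step_reg[OF diff_eq[OF Eg(2) Ef(2)]]) (use Bg Ff h in \<open>auto intro: sm_A\<close>)
    have s2: "sm (n+1) (g2 - f2)"
      by (rule step_reg[OF diff_eq[OF Eg(3) Ef(3)]]) (use Bg Ff h in \<open>auto intro: sm_A\<close>)
    have s3: "sm (n+1) (g3 - f3)"
      by (rule step_reg[OF diff_eq[OF Eg(4) Ef(4)]]) (use Bg Ff h in \<open>auto intro: sm_A\<close>)
    have s4: "sm (n+1) (g4 - f4)"
      by (rule step_reg[OF diff_eq[OF Eg(5) Ef(5)]]) (use Bg Ff h in \<open>auto intro: sm_A\<close>)
    have e0: "g0 - f0 = - ((g1 - f1) + (g2 - f2) + (g3 - f3) + (g4 - f4))"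
      using sum0 by algebra
    have s0: "sm (n+1) (g0 - f0)" unfolding e0
      by (rule sm_uminus[OF sm_add[OF sm_add[OF sm_add[OF s1 s2] s3] s4]])
    show "sm (n+1) (g0 - f0) \<and> sm (n+1) (g1 - f1) \<and> sm (n+1) (g2 - f2) \<and> sm (n+1) (g3 - f3) \<and> sm (n+1) (g4 - f4)"
      using s0 s1 s2 s3 s4 by blast
  qed
  then show ?thesis by simp
qed


definition pole :: "complex fls \<Rightarrow> bool" where
  "pole x \<longleftrightarrow> x \<noteq> 0 \<and> fls_subdegree x < 0"

lemma pole_lemma': "pole x \<Longrightarrow> D x = x * B + fls_const a \<Longrightarrow> sm 1 B"
  unfolding pole_def using pole_lemma by blast

lemma sm1_0: "sm 1 x \<Longrightarrow> sm 0 x" by (rule sm_mono[of 0 1]) simp_all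
lemma sm2_1: "sm (n + 2) x \<Longrightarrow> sm (n + 1) x" by (rule sm_mono[of "n+1" "n+2"]) simp_all

lemma case2:
  assumes "sys a0 a1 a2 a3 a4 f0 f1 f2 f3 f4" "pole f0" "pole f1" "pole f3" "sm 0 f2" "sm 0 f4"
  shows "sm 1 (f1 - f2 + f3 - f4) \<and> sm 1 (f2 - f3 + f4 - f0) \<and> sm 1 (f4 - f0 + f1 - f2) \<and>
    ex1 (f3 - f4 + f0 - f1) \<and> ex1 (f0 - f1 + f2 - f3) \<and> sm 1 f2 \<and> sm 1 f4 \<and>
    ex1 f0 \<and> ex1 f1 \<and> ex1 f3 \<and> (a2 = 0 \<longrightarrow> f2 = 0) \<and> (a4 = 0 \<longrightarrow> f4 = 0)"
proof -
  note E = sysD[OF assms(1)]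
  have P0: "sm 1 (f1 - f2 + f3 - f4)" by (rule pole_lemma'[OF assms(2) E(1)])
  have P1: "sm 1 (f2 - f3 + f4 - f0)" by (rule pole_lemma'[OF assms(3) E(2)])
  have P3: "sm 1 (f4 - f0 + f1 - f2)" by (rule pole_lemma'[OF assms(4) E(4)])
  define A0 where "A0 = f1 - f2 + f3 - f4"
  define A1 where "A1 = f2 - f3 + f4 - f0"
  have a0: "sm 0 A0" using sm1_0[OF P0] by (simp add: A0_def)
  have a1: "sm 0 A1" using sm1_0[OF P1] by (simp add: A1_def)
  have r2: "sm 0 f2" and r4: "sm 0 f4" by (fact assms(5)) (fact assms(6))
  have "(f3 - f4 + f0 - f1) = (3 * f2 + 2 * f4 - 2 * A1) - T"
    unfolding E(6) A1_def by algebra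
  then have X2: "ex1 (f3 - f4 + f0 - f1)" by (rule ex1_neg) (intro smI; fact)
  have "(f0 - f1 + f2 - f3) = T + (- (2 * A0) - 2 * f2 - 3 * f4)"
    unfolding E(6) A0_def by algebra
  then have X4: "ex1 (f0 - f1 + f2 - f3)" by (rule ex1_pos) (intro smI; fact)
  note R2 = reg_lemma[OF assms(5) E(3) X2] and R4 = reg_lemma[OF assms(6) E(5) X4]
  have "f0 = T + (- A0 - 2 * f2 - 2 * f4)"
    unfolding E(6) A0_def by algebra
  then have X0: "ex1 f0" by (rule ex1_pos) (intro smI; fact)
  have "f1 = T + (A1 - 2 * f2 - 2 * f4)"
    unfolding E(6) A1_def by algebra
  then have X1: "ex1 f1" by (rule ex1_pos) (intro smI; fact)
  have "f3 = (A0 - A1 + 3 * f2 + 3 * f4) - T"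
    unfolding E(6) A0_def A1_def by algebra
  then have X3: "ex1 f3" by (rule ex1_neg) (intro smI; fact)
  show ?thesis using P0 P1 P3 X2 X4 R2 R4 X0 X1 X3 by blast
qed

lemma case2_uniq:
  assumes f: "sys a0 a1 a2 a3 a4 f0 f1 f2 f3 f4" "pole f0" "pole f1" "pole f3" "sm 0 f2" "sm 0 f4"
  and g: "sys a0 a1 a2 a3 a4 g0 g1 g2 g3 g4" "pole g0" "pole g1" "pole g3" "sm 0 g2" "sm 0 g4"
  shows "g0 = f0 \<and> g1 = f1 \<and> g2 = f2 \<and> g3 = f3 \<and> g4 = f4"
proof -
  note Ef = sysD[OF f(1)] and Eg = sysD[OF g(1)]
  note Ff = case2[OF f] and Fg = case2[OF g]
  define h0 where "h0 = g0 - f0"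
  define h1 where "h1 = g1 - f1"
  define h2 where "h2 = g2 - f2"
  define h3 where "h3 = g3 - f3"
  define h4 where "h4 = g4 - f4"
  have "h0 = 0 \<and> h1 = 0 \<and> h2 = 0 \<and> h3 = 0 \<and> h4 = 0"
  proof (rule uniq_driver)
    fix n assume h: "sm n h0" "sm n h1" "sm n h2" "sm n h3" "sm n h4"
    then have hh: "sm n (g0 - f0)" "sm n (g1 - f1)" "sm n (g2 - f2)" "sm n (g3 - f3)" "sm n (g4 - f4)"
      unfolding h0_def h1_def h2_def h3_def h4_def .
    define Q0 where "Q0 = (g1 - g2 + g3 - g4) - (f1 - f2 + f3 - f4)"
    define Q1 where "Q1 = (g2 - g3 + g4 - g0) - (f2 - f3 + f4 - f0)"
    have q0: "sm (n + 1) Q0" unfolding Q0_def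
      by (rule sm2_1, rule step_pole[OF diff_eq[OF Eg(1) Ef(1)]]) (use Fg Ff hh in auto)
    have q1: "sm (n + 1) Q1" unfolding Q1_def
      by (rule sm2_1, rule step_pole[OF diff_eq[OF Eg(2) Ef(2)]]) (use Fg Ff hh in auto)
    have s2: "sm (n+1) h2" unfolding h2_def
      by (rule step_reg[OF diff_eq[OF Eg(3) Ef(3)]]) (use Fg Ff hh in \<open>auto intro: sm_A\<close>)
    have s4: "sm (n+1) h4" unfolding h4_def
      by (rule step_reg[OF diff_eq[OF Eg(5) Ef(5)]]) (use Fg Ff hh in \<open>auto intro: sm_A\<close>)
    have s0: "sm (n+1) h0"
    proof -
      have e: "h0 = - Q0 - 2 * h2 - 2 * h4"
        unfolding h0_def h2_def h4_def Q0_def using Ef(6) Eg(6) by algebra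
      show ?thesis unfolding e by (intro smI; fact)
    qed
    have s1: "sm (n+1) h1"
    proof -
      have e: "h1 = Q1 - 2 * h2 - 2 * h4"
        unfolding h1_def h2_def h4_def Q1_def using Ef(6) Eg(6) by algebra
      show ?thesis unfolding e by (intro smI; fact)
    qed
    have s3: "sm (n+1) h3"
    proof -
      have e: "h3 = Q0 - Q1 + 3 * h2 + 3 * h4"
        unfolding h3_def h2_def h4_def Q0_def Q1_def using Ef(6) Eg(6) by algebra
      show ?thesis unfolding e by (intro smI; fact)
    qed
    show "sm (n+1) h0 \<and> sm (n+1) h1 \<and> sm (n+1) h2 \<and> sm (n+1) h3 \<and> sm (n+1) h4"
      using s0 s1 s2 s3 s4 by blast
  qed
  then show ?thesis unfolding h0_def h1_def h2_def h3_def h4_def by simp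
qed


lemma case3:
  assumes "sys a0 a1 a2 a3 a4 f0 f1 f2 f3 f4" "pole f0" "pole f1" "pole f2" "sm 0 f3" "sm 0 f4"
  shows "sm 1 (f1 - f2 + f3 - f4) \<and> sm 1 (f2 - f3 + f4 - f0) \<and> sm 1 (f3 - f4 + f0 - f1) \<and>
    ex1 (f4 - f0 + f1 - f2) \<and> ex1 (f0 - f1 + f2 - f3) \<and> sm 1 f3 \<and> sm 1 f4 \<and>
    ex1 f0 \<and> ex1 f1 \<and> ex1 f2 \<and> (a3 = 0 \<longrightarrow> f3 = 0) \<and> (a4 = 0 \<longrightarrow> f4 = 0)"
proof -
  note E = sysD[OF assms(1)]
  have P0: "sm 1 (f1 - f2 + f3 - f4)" by (rule pole_lemma'[OF assms(2) E(1)])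
  have P1: "sm 1 (f2 - f3 + f4 - f0)" by (rule pole_lemma'[OF assms(3) E(2)])
  have P2: "sm 1 (f3 - f4 + f0 - f1)" by (rule pole_lemma'[OF assms(4) E(3)])
  define A0 where "A0 = f1 - f2 + f3 - f4"
  define A1 where "A1 = f2 - f3 + f4 - f0"
  define A2 where "A2 = f3 - f4 + f0 - f1"
  have a0: "sm 0 A0" using sm1_0[OF P0] by (simp add: A0_def)
  have a1: "sm 0 A1" using sm1_0[OF P1] by (simp add: A1_def)
  have a2: "sm 0 A2" using sm1_0[OF P2] by (simp add: A2_def)
  have r3: "sm 0 f3" and r4: "sm 0 f4" by (fact assms(5)) (fact assms(6))
  have "3 * (f4 - f0 + f1 - f2) = (f3 + 4 * f4 + 2 * A0 - 2 * A2) - T"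
    unfolding E(6) A0_def A2_def by algebra
  then have X3: "ex1 (f4 - f0 + f1 - f2)" by (rule ex1_s3neg) (intro smI; fact)
  have "3 * (f0 - f1 + f2 - f3) = T + (- (4 * f3) - f4 - 2 * A0 + 2 * A2)"
    unfolding E(6) A0_def A2_def by algebra
  then have X4: "ex1 (f0 - f1 + f2 - f3)" by (rule ex1_s3pos) (intro smI; fact)
  note R3 = reg_lemma[OF assms(5) E(4) X3] and R4 = reg_lemma[OF assms(6) E(5) X4]
  have "3 * f0 = T + (- f3 - f4 - 2 * A0 - 3 * A1 - A2)"
    unfolding E(6) A0_def A1_def A2_def by algebra
  then have X0: "ex1 f0" by (rule ex1_s3pos) (intro smI; fact)
  have "3 * f1 = T + (- f3 - f4 + A0 - A2)"
    unfolding E(6) A0_def A1_def A2_def by algebra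
  then have X1: "ex1 f1" by (rule ex1_s3pos) (intro smI; fact)
  have "3 * f2 = T + (- f3 - f4 + A0 + 3 * A1 + 2 * A2)"
    unfolding E(6) A0_def A1_def A2_def by algebra
  then have X2: "ex1 f2" by (rule ex1_s3pos) (intro smI; fact)
  show ?thesis using P0 P1 P2 X3 X4 R3 R4 X0 X1 X2 by blast
qed

lemma case3_uniq:
  assumes f: "sys a0 a1 a2 a3 a4 f0 f1 f2 f3 f4" "pole f0" "pole f1" "pole f2" "sm 0 f3" "sm 0 f4"
  and g: "sys a0 a1 a2 a3 a4 g0 g1 g2 g3 g4" "pole g0" "pole g1" "pole g2" "sm 0 g3" "sm 0 g4"
  shows "g0 = f0 \<and> g1 = f1 \<and> g2 = f2 \<and> g3 = f3 \<and> g4 = f4"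
proof -
  note Ef = sysD[OF f(1)] and Eg = sysD[OF g(1)]
  note Ff = case3[OF f] and Fg = case3[OF g]
  define h0 where "h0 = g0 - f0"
  define h1 where "h1 = g1 - f1"
  define h2 where "h2 = g2 - f2"
  define h3 where "h3 = g3 - f3"
  define h4 where "h4 = g4 - f4"
  have "h0 = 0 \<and> h1 = 0 \<and> h2 = 0 \<and> h3 = 0 \<and> h4 = 0"
  proof (rule uniq_driver)
    fix n assume h: "sm n h0" "sm n h1" "sm n h2" "sm n h3" "sm n h4"
    then have hh: "sm n (g0 - f0)" "sm n (g1 - f1)" "sm n (g2 - f2)" "sm n (g3 - f3)" "sm n (g4 - f4)"
      unfolding h0_def h1_def h2_def h3_def h4_def .
    define Q0 where "Q0 = (g1 - g2 + g3 - g4) - (f1 - f2 + f3 - f4)"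
    have q0: "sm (n + 1) Q0" unfolding Q0_def
      by (rule sm2_1, rule step_pole[OF diff_eq[OF Eg(1) Ef(1)]]) (use Fg Ff hh in auto)
    define Q1 where "Q1 = (g2 - g3 + g4 - g0) - (f2 - f3 + f4 - f0)"
    have q1: "sm (n + 1) Q1" unfolding Q1_def
      by (rule sm2_1, rule step_pole[OF diff_eq[OF Eg(2) Ef(2)]]) (use Fg Ff hh in auto)
    define Q2 where "Q2 = (g3 - g4 + g0 - g1) - (f3 - f4 + f0 - f1)"
    have q2: "sm (n + 1) Q2" unfolding Q2_def
      by (rule sm2_1, rule step_pole[OF diff_eq[OF Eg(3) Ef(3)]]) (use Fg Ff hh in auto)
    have s3: "sm (n+1) h3" unfolding h3_def
      by (rule step_reg[OF diff_eq[OF Eg(4) Ef(4)]]) (use Fg Ff hh in \<open>auto intro: sm_A\<close>)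
    have s4: "sm (n+1) h4" unfolding h4_def
      by (rule step_reg[OF diff_eq[OF Eg(5) Ef(5)]]) (use Fg Ff hh in \<open>auto intro: sm_A\<close>)
    have s0: "sm (n+1) h0"
    proof -
      have e: "3 * h0 = - h3 - h4 - 2 * Q0 - 3 * Q1 - Q2"
        unfolding h0_def h1_def h2_def h3_def h4_def Q0_def Q1_def Q2_def using Ef(6) Eg(6) by algebra
      have "sm (n+1) (3 * h0)" unfolding e by (intro smI; fact)
      then show ?thesis by (rule sm_num_cancel)
    qed
    have s1: "sm (n+1) h1"
    proof -
      have e: "3 * h1 = - h3 - h4 + Q0 - Q2"
        unfolding h0_def h1_def h2_def h3_def h4_def Q0_def Q1_def Q2_def using Ef(6) Eg(6) by algebra
      have "sm (n+1) (3 * h1)" unfolding e by (intro smI; fact)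
      then show ?thesis by (rule sm_num_cancel)
    qed
    have s2: "sm (n+1) h2"
    proof -
      have e: "3 * h2 = - h3 - h4 + Q0 + 3 * Q1 + 2 * Q2"
        unfolding h0_def h1_def h2_def h3_def h4_def Q0_def Q1_def Q2_def using Ef(6) Eg(6) by algebra
      have "sm (n+1) (3 * h2)" unfolding e by (intro smI; fact)
      then show ?thesis by (rule sm_num_cancel)
    qed
    show "sm (n+1) h0 \<and> sm (n+1) h1 \<and> sm (n+1) h2 \<and> sm (n+1) h3 \<and> sm (n+1) h4"
      using s0 s1 s2 s3 s4 by blast
  qed
  then show ?thesis unfolding h0_def h1_def h2_def h3_def h4_def by simp
qed

lemma case4:
  assumes "sys a0 a1 a2 a3 a4 f0 f1 f2 f3 f4" "pole f0" "pole f1" "pole f2" "pole f3" "pole f4"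
  shows "sm 1 (f1 - f2 + f3 - f4) \<and> sm 1 (f2 - f3 + f4 - f0) \<and> sm 1 (f3 - f4 + f0 - f1) \<and> sm 1 (f4 - f0 + f1 - f2) \<and> sm 1 (f0 - f1 + f2 - f3) \<and> ex1 f0 \<and> ex1 f1 \<and> ex1 f2 \<and> ex1 f3 \<and> ex1 f4"
proof -
  note E = sysD[OF assms(1)]
  have P0: "sm 1 (f1 - f2 + f3 - f4)" by (rule pole_lemma'[OF assms(2) E(1)])
  define A0 where "A0 = f1 - f2 + f3 - f4"
  have a0: "sm 0 A0" using sm1_0[OF P0] by (simp add: A0_def)
  have P1: "sm 1 (f2 - f3 + f4 - f0)" by (rule pole_lemma'[OF assms(3) E(2)])
  define A1 where "A1 = f2 - f3 + f4 - f0"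
  have a1: "sm 0 A1" using sm1_0[OF P1] by (simp add: A1_def)
  have P2: "sm 1 (f3 - f4 + f0 - f1)" by (rule pole_lemma'[OF assms(4) E(3)])
  define A2 where "A2 = f3 - f4 + f0 - f1"
  have a2: "sm 0 A2" using sm1_0[OF P2] by (simp add: A2_def)
  have P3: "sm 1 (f4 - f0 + f1 - f2)" by (rule pole_lemma'[OF assms(5) E(4)])
  define A3 where "A3 = f4 - f0 + f1 - f2"
  have a3: "sm 0 A3" using sm1_0[OF P3] by (simp add: A3_def)
  have P4: "sm 1 (f0 - f1 + f2 - f3)" by (rule pole_lemma'[OF assms(6) E(5)])
  define A4 where "A4 = f0 - f1 + f2 - f3"
  have a4: "sm 0 A4" using sm1_0[OF P4] by (simp add: A4_def)
  have "5 * f0 = T + (- (3 * A0) - 6 * A1 - 4 * A2 - 2 * A3)"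
    unfolding E(6) A0_def A1_def A2_def A3_def A4_def by algebra
  then have X0: "ex1 f0" by (rule ex1_s5pos) (intro smI; fact)
  have "5 * f1 = T + (- (3 * A1) - 6 * A2 - 4 * A3 - 2 * A4)"
    unfolding E(6) A0_def A1_def A2_def A3_def A4_def by algebra
  then have X1: "ex1 f1" by (rule ex1_s5pos) (intro smI; fact)
  have "5 * f2 = T + (- (3 * A2) - 6 * A3 - 4 * A4 - 2 * A0)"
    unfolding E(6) A0_def A1_def A2_def A3_def A4_def by algebra
  then have X2: "ex1 f2" by (rule ex1_s5pos) (intro smI; fact)
  have "5 * f3 = T + (- (3 * A3) - 6 * A4 - 4 * A0 - 2 * A1)"
    unfolding E(6) A0_def A1_def A2_def A3_def A4_def by algebra
  then have X3: "ex1 f3" by (rule ex1_s5pos) (intro smI; fact)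
  have "5 * f4 = T + (- (3 * A4) - 6 * A0 - 4 * A1 - 2 * A2)"
    unfolding E(6) A0_def A1_def A2_def A3_def A4_def by algebra
  then have X4: "ex1 f4" by (rule ex1_s5pos) (intro smI; fact)
  show ?thesis using P0 P1 P2 P3 P4 X0 X1 X2 X3 X4 by blast
qed

lemma case4_uniq:
  assumes f: "sys a0 a1 a2 a3 a4 f0 f1 f2 f3 f4" "pole f0" "pole f1" "pole f2" "pole f3" "pole f4"
  and g: "sys a0 a1 a2 a3 a4 g0 g1 g2 g3 g4" "pole g0" "pole g1" "pole g2" "pole g3" "pole g4"
  shows "g0 = f0 \<and> g1 = f1 \<and> g2 = f2 \<and> g3 = f3 \<and> g4 = f4"
proof -
  note Ef = sysD[OF f(1)] and Eg = sysD[OF g(1)]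
  note Ff = case4[OF f] and Fg = case4[OF g]
  define h0 where "h0 = g0 - f0"
  define h1 where "h1 = g1 - f1"
  define h2 where "h2 = g2 - f2"
  define h3 where "h3 = g3 - f3"
  define h4 where "h4 = g4 - f4"
  have "h0 = 0 \<and> h1 = 0 \<and> h2 = 0 \<and> h3 = 0 \<and> h4 = 0"
  proof (rule uniq_driver)
    fix n assume h: "sm n h0" "sm n h1" "sm n h2" "sm n h3" "sm n h4"
    then have hh: "sm n (g0 - f0)" "sm n (g1 - f1)" "sm n (g2 - f2)" "sm n (g3 - f3)" "sm n (g4 - f4)"
      unfolding h0_def h1_def h2_def h3_def h4_def .
    define Q0 where "Q0 = (g1 - g2 + g3 - g4) - (f1 - f2 + f3 - f4)"
    have q0: "sm (n + 1) Q0" unfolding Q0_def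
      by (rule sm2_1, rule step_pole[OF diff_eq[OF Eg(1) Ef(1)]]) (use Fg Ff hh in auto)
    define Q1 where "Q1 = (g2 - g3 + g4 - g0) - (f2 - f3 + f4 - f0)"
    have q1: "sm (n + 1) Q1" unfolding Q1_def
      by (rule sm2_1, rule step_pole[OF diff_eq[OF Eg(2) Ef(2)]]) (use Fg Ff hh in auto)
    define Q2 where "Q2 = (g3 - g4 + g0 - g1) - (f3 - f4 + f0 - f1)"
    have q2: "sm (n + 1) Q2" unfolding Q2_def
      by (rule sm2_1, rule step_pole[OF diff_eq[OF Eg(3) Ef(3)]]) (use Fg Ff hh in auto)
    define Q3 where "Q3 = (g4 - g0 + g1 - g2) - (f4 - f0 + f1 - f2)"
    have q3: "sm (n + 1) Q3" unfolding Q3_def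
      by (rule sm2_1, rule step_pole[OF diff_eq[OF Eg(4) Ef(4)]]) (use Fg Ff hh in auto)
    define Q4 where "Q4 = (g0 - g1 + g2 - g3) - (f0 - f1 + f2 - f3)"
    have q4: "sm (n + 1) Q4" unfolding Q4_def
      by (rule sm2_1, rule step_pole[OF diff_eq[OF Eg(5) Ef(5)]]) (use Fg Ff hh in auto)
    have s0: "sm (n+1) h0"
    proof -
      have e: "5 * h0 = - (3 * Q0) - 6 * Q1 - 4 * Q2 - 2 * Q3"
        unfolding h0_def h1_def h2_def h3_def h4_def Q0_def Q1_def Q2_def Q3_def Q4_def using Ef(6) Eg(6) by algebra
      have "sm (n+1) (5 * h0)" unfolding e by (intro smI; fact)
      then show ?thesis by (rule sm_num_cancel)
    qed
    have s1: "sm (n+1) h1"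
    proof -
      have e: "5 * h1 = - (3 * Q1) - 6 * Q2 - 4 * Q3 - 2 * Q4"
        unfolding h0_def h1_def h2_def h3_def h4_def Q0_def Q1_def Q2_def Q3_def Q4_def using Ef(6) Eg(6) by algebra
      have "sm (n+1) (5 * h1)" unfolding e by (intro smI; fact)
      then show ?thesis by (rule sm_num_cancel)
    qed
    have s2: "sm (n+1) h2"
    proof -
      have e: "5 * h2 = - (3 * Q2) - 6 * Q3 - 4 * Q4 - 2 * Q0"
        unfolding h0_def h1_def h2_def h3_def h4_def Q0_def Q1_def Q2_def Q3_def Q4_def using Ef(6) Eg(6) by algebra
      have "sm (n+1) (5 * h2)" unfolding e by (intro smI; fact)
      then show ?thesis by (rule sm_num_cancel)
    qed
    have s3: "sm (n+1) h3"
    proof -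
      have e: "5 * h3 = - (3 * Q3) - 6 * Q4 - 4 * Q0 - 2 * Q1"
        unfolding h0_def h1_def h2_def h3_def h4_def Q0_def Q1_def Q2_def Q3_def Q4_def using Ef(6) Eg(6) by algebra
      have "sm (n+1) (5 * h3)" unfolding e by (intro smI; fact)
      then show ?thesis by (rule sm_num_cancel)
    qed
    have s4: "sm (n+1) h4"
    proof -
      have e: "5 * h4 = - (3 * Q4) - 6 * Q0 - 4 * Q1 - 2 * Q2"
        unfolding h0_def h1_def h2_def h3_def h4_def Q0_def Q1_def Q2_def Q3_def Q4_def using Ef(6) Eg(6) by algebra
      have "sm (n+1) (5 * h4)" unfolding e by (intro smI; fact)
      then show ?thesis by (rule sm_num_cancel)
    qed
    show "sm (n+1) h0 \<and> sm (n+1) h1 \<and> sm (n+1) h2 \<and> sm (n+1) h3 \<and> sm (n+1) h4"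
      using s0 s1 s2 s3 s4 by blast
  qed
  then show ?thesis unfolding h0_def h1_def h2_def h3_def h4_def by simp
qed


lemma less5: "(n::nat) < 5 \<Longrightarrow> n = 0 \<or> n = 1 \<or> n = 2 \<or> n = 3 \<or> n = 4"
  by auto

lemma all5: "(\<forall>j<(5::nat). P j) \<longleftrightarrow> P 0 \<and> P 1 \<and> P 2 \<and> P 3 \<and> P 4"
  using less5 by auto

definition sysF :: "(nat \<Rightarrow> complex) \<Rightarrow> (nat \<Rightarrow> complex fls) \<Rightarrow> bool" where
  "sysF \<alpha> a \<longleftrightarrow> (\<forall>j<5. D (a j) = a j * (a ((j+1) mod 5) - a ((j+2) mod 5) + a ((j+3) mod 5)
      - a ((j+4) mod 5)) + fls_const (\<alpha> j)) \<and> a 0 + a 1 + a 2 + a 3 + a 4 = T"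

lemma sol_fls:
  assumes "A4_rational_solution \<alpha> f"
  shows "\<exists>a. (\<forall>j<5. repr (f j) (a j)) \<and> sysF \<alpha> a"
proof -
  define a where "a j = (SOME x. repr (f j) x)" for j
  have r: "repr (f j) (a j)" if "j < 5" for j
    unfolding a_def using rat_repr assms that unfolding A4_rational_solution_def
    by (metis someI_ex)
  have ev: "\<forall>\<^sub>F t in cofinite.
        (\<forall>j<5. (f j has_field_derivative
            (f j t * (comp f (j+1) t - comp f (j+2) t + comp f (j+3) t - comp f (j+4) t) + \<alpha> j))
            (at t)) \<and>
        f 0 t + f 1 t + f 2 t + f 3 t + f 4 t = t"
    using assms unfolding A4_rational_solution_def by blast
  have eqs: "D (a j) = a j * (a ((j+1) mod 5) - a ((j+2) mod 5) + a ((j+3) mod 5)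
      - a ((j+4) mod 5)) + fls_const (\<alpha> j)" if j: "j < 5" for j
  proof -
    have rr: "repr (\<lambda>t. f j t * (comp f (j+1) t - comp f (j+2) t + comp f (j+3) t - comp f (j+4) t) + \<alpha> j)
       (a j * (a ((j+1) mod 5) - a ((j+2) mod 5) + a ((j+3) mod 5) - a ((j+4) mod 5)) + fls_const (\<alpha> j))"
      by (intro repr_add repr_mult repr_diff repr_const r j) simp_all
    have "\<forall>\<^sub>F t in cofinite. (f j has_field_derivative
            (f j t * (comp f (j+1) t - comp f (j+2) t + comp f (j+3) t - comp f (j+4) t) + \<alpha> j)) (at t)"
      using ev by eventually_elim (use j in blast)
    from repr_deriv[OF r[OF j] rr this] show ?thesis by simp
  qed
  have rs: "repr (\<lambda>t. f 0 t + f 1 t + f 2 t + f 3 t + f 4 t) (a 0 + a 1 + a 2 + a 3 + a 4)"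
    by (intro repr_add r) simp_all
  have "\<forall>\<^sub>F t in cofinite. f 0 t + f 1 t + f 2 t + f 3 t + f 4 t = t"
    using ev by eventually_elim blast
  from repr_unique[OF rs repr_id this] have "a 0 + a 1 + a 2 + a 3 + a 4 = T" .
  then show ?thesis using r eqs unfolding sysF_def by blast
qed

lemma rot:
  assumes "sysF \<alpha> a" "r < 5"
  shows "sys (\<alpha> r) (\<alpha> ((r+1) mod 5)) (\<alpha> ((r+2) mod 5)) (\<alpha> ((r+3) mod 5)) (\<alpha> ((r+4) mod 5))
             (a r) (a ((r+1) mod 5)) (a ((r+2) mod 5)) (a ((r+3) mod 5)) (a ((r+4) mod 5))"
proof -
  have E: "\<forall>j<5. D (a j) = a j * (a ((j+1) mod 5) - a ((j+2) mod 5) + a ((j+3) mod 5)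
      - a ((j+4) mod 5)) + fls_const (\<alpha> j)" and S: "a 0 + a 1 + a 2 + a 3 + a 4 = T"
    using assms(1) unfolding sysF_def by blast+
  have m: "(0 + 1) mod 5 = (1::nat)" "(0 + 2) mod 5 = (2::nat)" "(0 + 3) mod 5 = (3::nat)" "(0 + 4) mod 5 = (4::nat)" "(1 + 1) mod 5 = (2::nat)" "(1 + 2) mod 5 = (3::nat)" "(1 + 3) mod 5 = (4::nat)" "(1 + 4) mod 5 = (0::nat)" "(2 + 1) mod 5 = (3::nat)" "(2 + 2) mod 5 = (4::nat)" "(2 + 3) mod 5 = (0::nat)" "(2 + 4) mod 5 = (1::nat)" "(3 + 1) mod 5 = (4::nat)" "(3 + 2) mod 5 = (0::nat)" "(3 + 3) mod 5 = (1::nat)" "(3 + 4) mod 5 = (2::nat)" "(4 + 1) mod 5 = (0::nat)" "(4 + 2) mod 5 = (1::nat)" "(4 + 3) mod 5 = (2::nat)" "(4 + 4) mod 5 = (3::nat)" by presburger+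
  have E0: "D (a 0) = a 0 * (a 1 - a 2 + a 3 - a 4) + fls_const (\<alpha> 0)"
    using E[rule_format, of 0, unfolded m] by simp
  have E1: "D (a 1) = a 1 * (a 2 - a 3 + a 4 - a 0) + fls_const (\<alpha> 1)"
    using E[rule_format, of 1, unfolded m] by simp
  have E2: "D (a 2) = a 2 * (a 3 - a 4 + a 0 - a 1) + fls_const (\<alpha> 2)"
    using E[rule_format, of 2, unfolded m] by simp
  have E3: "D (a 3) = a 3 * (a 4 - a 0 + a 1 - a 2) + fls_const (\<alpha> 3)"
    using E[rule_format, of 3, unfolded m] by simp
  have E4: "D (a 4) = a 4 * (a 0 - a 1 + a 2 - a 3) + fls_const (\<alpha> 4)"
    using E[rule_format, of 4, unfolded m] by simp
  have c0: ?thesis if "r = 0"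
    unfolding that m sys_def by (intro conjI E0 E1 E2 E3 E4) (use S in \<open>simp add: ac_simps\<close>)
  have c1: ?thesis if "r = 1"
    unfolding that m sys_def by (intro conjI E0 E1 E2 E3 E4) (use S in \<open>simp add: ac_simps\<close>)
  have c2: ?thesis if "r = 2"
    unfolding that m sys_def by (intro conjI E0 E1 E2 E3 E4) (use S in \<open>simp add: ac_simps\<close>)
  have c3: ?thesis if "r = 3"
    unfolding that m sys_def by (intro conjI E0 E1 E2 E3 E4) (use S in \<open>simp add: ac_simps\<close>)
  have c4: ?thesis if "r = 4"
    unfolding that m sys_def by (intro conjI E0 E1 E2 E3 E4) (use S in \<open>simp add: ac_simps\<close>)
  from less5[OF assms(2)] show ?thesis using c0 c1 c2 c3 c4 by blast
qed

lemma all_rot: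
  assumes "r < 5" "\<And>k. k < 5 \<Longrightarrow> P ((r + k) mod 5)"
  shows "\<And>j. j < (5::nat) \<Longrightarrow> P j"
proof -
  fix j :: nat assume j: "j < 5"
  have "P ((r + (j + 5 - r) mod 5) mod 5)" by (rule assms(2)) simp
  moreover have "(r + (j + 5 - r) mod 5) mod 5 = j"
    using less5[OF assms(1)] less5[OF j] by (elim disjE) simp_all
  ultimately show "P j" by simp
qed

lemma mod_shift: "(i + k) mod 5 = (i mod 5 + k) mod (5::nat)"
  by (simp add: mod_add_left_eq)


lemma case_trans:
  assumes ra: "\<forall>j<5. repr (f j) (a j)" and ic: "in_case f c i" and rdef: "r = i mod 5"
  shows "(c = 1 \<and> sm 0 (a ((r+1) mod 5)) \<and> sm 0 (a ((r+2) mod 5)) \<and> sm 0 (a ((r+3) mod 5)) \<and> sm 0 (a ((r+4) mod 5)))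
    \<or> (c = 2 \<and> pole (a r) \<and> pole (a ((r+1) mod 5)) \<and> pole (a ((r+3) mod 5)) \<and> sm 0 (a ((r+2) mod 5)) \<and> sm 0 (a ((r+4) mod 5)))
    \<or> (c = 3 \<and> pole (a r) \<and> pole (a ((r+1) mod 5)) \<and> pole (a ((r+2) mod 5)) \<and> sm 0 (a ((r+3) mod 5)) \<and> sm 0 (a ((r+4) mod 5)))
    \<or> (c = 4 \<and> pole (a r) \<and> pole (a ((r+1) mod 5)) \<and> pole (a ((r+2) mod 5)) \<and> pole (a ((r+3) mod 5)) \<and> pole (a ((r+4) mod 5)))"
proof -
  have ms: "\<And>k. (i + k) mod 5 = (r + k) mod 5" unfolding rdef by (simp add: mod_add_left_eq)
  have mi: "i mod 5 = r" using rdef by simp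
  have r5: "r < 5" using rdef by simp
  have P: "pole (a x)" if "x < 5" "pole_at_inf (f x)" for x
    using repr_pole[OF ra[rule_format, OF that(1)] that(2)] by (simp add: pole_def)
  have Rg: "sm 0 (a x)" if "x < 5" "regular_at_inf (f x)" for x
    using repr_reg[OF ra[rule_format, OF that(1)] that(2)] .
  have lt: "\<And>k. (r + k) mod 5 < 5" by simp
  have ic': "(c = 1 \<and> pole_at_inf (f r) \<and> regular_at_inf (f ((r+1) mod 5)) \<and>
       regular_at_inf (f ((r+2) mod 5)) \<and> regular_at_inf (f ((r+3) mod 5)) \<and> regular_at_inf (f ((r+4) mod 5)))
  \<or> (c = 2 \<and> pole_at_inf (f r) \<and> pole_at_inf (f ((r+1) mod 5)) \<and> pole_at_inf (f ((r+3) mod 5)) \<and>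
       regular_at_inf (f ((r+2) mod 5)) \<and> regular_at_inf (f ((r+4) mod 5)))
  \<or> (c = 3 \<and> pole_at_inf (f r) \<and> pole_at_inf (f ((r+1) mod 5)) \<and> pole_at_inf (f ((r+2) mod 5)) \<and>
       regular_at_inf (f ((r+3) mod 5)) \<and> regular_at_inf (f ((r+4) mod 5)))
  \<or> (c = 4 \<and> (\<forall>j<5. pole_at_inf (f j)))"
    using ic unfolding in_case_def ms mi .
  show ?thesis
    using ic' P[OF r5] P[OF lt] Rg[OF lt] r5 lt by blast
qed

lemma zero_trans: "repr g x \<Longrightarrow> x = 0 \<Longrightarrow> rat_zero g"
  unfolding rat_zero_def using repr_zero_imp by blast

theorem proposition1p3:
  fixes \<alpha> :: "nat \<Rightarrow> complex" and f :: "nat \<Rightarrow> complex \<Rightarrow> complex" and c i :: nat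
  assumes "A4_rational_solution \<alpha> f" and "in_case f c i"
  shows "(\<forall>g. A4_rational_solution \<alpha> g \<and> in_case g c i \<longrightarrow>
            (\<forall>j<5. \<forall>\<^sub>F t in at_infinity. g j t = f j t))
       \<and> (c = 1 \<longrightarrow> (\<forall>k\<in>{1..4}. \<alpha> ((i+k) mod 5) = 0 \<longrightarrow> rat_zero (comp f (i+k))))
       \<and> (c = 2 \<longrightarrow> (\<forall>k\<in>{2,4}. \<alpha> ((i+k) mod 5) = 0 \<longrightarrow> rat_zero (comp f (i+k))))
       \<and> (c = 3 \<longrightarrow> (\<forall>k\<in>{3,4}. \<alpha> ((i+k) mod 5) = 0 \<longrightarrow> rat_zero (comp f (i+k))))"
proof -
  obtain a where ra: "\<forall>j<5. repr (f j) (a j)" and sa: "sysF \<alpha> a"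
    using sol_fls[OF assms(1)] by blast
  define r where "r = i mod 5"
  have r5: "r < 5" by (simp add: r_def)
  have ms: "\<And>k. (i + k) mod 5 = (r + k) mod 5" unfolding r_def by (simp add: mod_add_left_eq)
  note Sa = rot[OF sa r5]
  note Ca = case_trans[OF ra assms(2) r_def]
  have rfa: "\<And>k. repr (f ((r + k) mod 5)) (a ((r + k) mod 5))" using ra by simp
  have part1: "\<forall>j<5. \<forall>\<^sub>F t in at_infinity. g j t = f j t"
    if g: "A4_rational_solution \<alpha> g" "in_case g c i" for g
  proof -
    obtain b where rb: "\<forall>j<5. repr (g j) (b j)" and sb: "sysF \<alpha> b"
      using sol_fls[OF g(1)] by blast
    note Sb = rot[OF sb r5]
    note Cb = case_trans[OF rb g(2) r_def]
    have eqs: "b r = a r \<and> b ((r+1) mod 5) = a ((r+1) mod 5) \<and> b ((r+2) mod 5) = a ((r+2) mod 5) \<and>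
        b ((r+3) mod 5) = a ((r+3) mod 5) \<and> b ((r+4) mod 5) = a ((r+4) mod 5)"
    proof -
      have c1: ?thesis if "c = 1" using case1_uniq[OF Sa _ _ _ _ Sb] Ca Cb that by auto
      have c2: ?thesis if "c = 2" using case2_uniq[OF Sa _ _ _ _ _ Sb] Ca Cb that by auto
      have c3: ?thesis if "c = 3" using case3_uniq[OF Sa _ _ _ _ _ Sb] Ca Cb that by auto
      have c4: ?thesis if "c = 4" using case4_uniq[OF Sa _ _ _ _ _ Sb] Ca Cb that by auto
      from Ca have "c = 1 \<or> c = 2 \<or> c = 3 \<or> c = 4" by blast
      then show ?thesis using c1 c2 c3 c4 by blast
    qed
    have ab: "b j = a j" if "j < 5" for j
    proof (rule all_rot[OF r5 _ that])
      fix k :: nat assume "k < 5"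
      then have "k = 0 \<or> k = 1 \<or> k = 2 \<or> k = 3 \<or> k = 4" by (rule less5)
      then show "b ((r + k) mod 5) = a ((r + k) mod 5)" using eqs r5 by auto
    qed
    show ?thesis
    proof (intro allI impI)
      fix j :: nat assume j: "j < 5"
      have "repr (g j) (a j)" using rb[rule_format, OF j] unfolding ab[OF j] .
      from repr_eq[OF this ra[rule_format, OF j]] show "\<forall>\<^sub>F t in at_infinity. g j t = f j t"
        by (rule cofinite_at_infinity)
    qed
  qed
  have z: "rat_zero (comp f (i + k))" if "a ((r + k) mod 5) = 0" for k
    using zero_trans[OF rfa that] unfolding ms .
  have p2: "\<forall>k\<in>{1..4}. \<alpha> ((i+k) mod 5) = 0 \<longrightarrow> rat_zero (comp f (i+k))" if c: "c = 1"
  proof -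
    have h: "sm 0 (a ((r+1) mod 5)) \<and> sm 0 (a ((r+2) mod 5)) \<and> sm 0 (a ((r+3) mod 5)) \<and> sm 0 (a ((r+4) mod 5))"
      using Ca c by auto
    show ?thesis
    proof (intro ballI impI)
      fix k :: nat assume k: "k \<in> {1..4}" and al: "\<alpha> ((i+k) mod 5) = 0"
      from k have "k = 1 \<or> k = 2 \<or> k = 3 \<or> k = 4" by auto
      then have "a ((r + k) mod 5) = 0" using case1[OF Sa] h al unfolding ms by auto
      then show "rat_zero (comp f (i + k))" by (rule z)
    qed
  qed
  have p3: "\<forall>k\<in>{2,4}. \<alpha> ((i+k) mod 5) = 0 \<longrightarrow> rat_zero (comp f (i+k))" if c: "c = 2"
  proof -
    have h: "pole (a r) \<and> pole (a ((r+1) mod 5)) \<and> pole (a ((r+3) mod 5)) \<and> sm 0 (a ((r+2) mod 5)) \<and> sm 0 (a ((r+4) mod 5))"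
      using Ca c by auto
    show ?thesis
    proof (intro ballI impI)
      fix k :: nat assume k: "k \<in> {2,4}" and al: "\<alpha> ((i+k) mod 5) = 0"
      from k have "k = 2 \<or> k = 4" by auto
      then have "a ((r + k) mod 5) = 0" using case2[OF Sa] h al unfolding ms by auto
      then show "rat_zero (comp f (i + k))" by (rule z)
    qed
  qed
  have p4: "\<forall>k\<in>{3,4}. \<alpha> ((i+k) mod 5) = 0 \<longrightarrow> rat_zero (comp f (i+k))" if c: "c = 3"
  proof -
    have h: "pole (a r) \<and> pole (a ((r+1) mod 5)) \<and> pole (a ((r+2) mod 5)) \<and> sm 0 (a ((r+3) mod 5)) \<and> sm 0 (a ((r+4) mod 5))"
      using Ca c by auto
    show ?thesis
    proof (intro ballI impI)
      fix k :: nat assume k: "k \<in> {3,4}" and al: "\<alpha> ((i+k) mod 5) = 0"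
      from k have "k = 3 \<or> k = 4" by auto
      then have "a ((r + k) mod 5) = 0" using case3[OF Sa] h al unfolding ms by auto
      then show "rat_zero (comp f (i + k))" by (rule z)
    qed
  qed
  show ?thesis using part1 p2 p3 p4 by blast
qed

end
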